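(* Let $B$ be a Noetherian ring, $\varphi\in B^{m\times n}$ with $m\le n$, $1\le t\le m$, and $S=B/I_t(\varphi)$. Let $\varphi'\in B^{m\times(t-1)}$ be the submatrix of the first $t-1$ columns, $\varphi''\in B^{(t-1)\times n}$ the submatrix of the first $t-1$ rows, and $\Delta=\det(\delta)$ where $\delta\in B^{(t-1)\times(t-1)}$ is the upper-left $(t-1)\times(t-1)$ submatrix of $\varphi$. Then $I_{t-1}(\varphi')\cdot I_{t-1}(\varphi'')S\subset\Delta S$.
   Context: $I_k(\psi)$ denotes the ideal generated by the $k\times k$ minors of a matrix $\psi$ (with $I_0=B$). *)

theory Defs
  imports "HOL-Combinatorics.Permutations"
begin

text \<open>Matrices over a commutative ring are functions nat => nat => 'a; an m x n matrix
  uses the entries with row index < m and column index < n (0-based).\<close>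

definition ideal_gen :: "'a::comm_ring_1 set \<Rightarrow> 'a set" where
  "ideal_gen X = {y. \<exists>F c. finite F \<and> F \<subseteq> X \<and> y = (\<Sum>x\<in>F. c x * x)}"

definition is_ideal :: "'a::comm_ring_1 set \<Rightarrow> bool" where
  "is_ideal I \<longleftrightarrow> 0 \<in> I \<and> (\<forall>x\<in>I. \<forall>y\<in>I. x + y \<in> I) \<and> (\<forall>r. \<forall>x\<in>I. r * x \<in> I)"

definition noetherian_ring :: "'a::comm_ring_1 itself \<Rightarrow> bool" where
  "noetherian_ring _ \<longleftrightarrow>
     (\<forall>I::'a set. is_ideal I \<longrightarrow> (\<exists>F. finite F \<and> I = ideal_gen F))"

definition det_nat :: "nat \<Rightarrow> (nat \<Rightarrow> nat \<Rightarrow> 'a::comm_ring_1) \<Rightarrow> 'a" where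
  "det_nat k M = (\<Sum>p | p permutes {..<k}. of_int (sign p) * (\<Prod>i<k. M i (p i)))"

definition minor :: "(nat \<Rightarrow> nat \<Rightarrow> 'a::comm_ring_1) \<Rightarrow> nat set \<Rightarrow> nat set \<Rightarrow> 'a" where
  "minor M R C = det_nat (card R)
     (\<lambda>i j. M (sorted_list_of_set R ! i) (sorted_list_of_set C ! j))"

text \<open>I_k of an m x n matrix: ideal generated by all k x k minors (I_0 = whole ring).\<close>
definition minors_ideal :: "nat \<Rightarrow> nat \<Rightarrow> nat \<Rightarrow> (nat \<Rightarrow> nat \<Rightarrow> 'a::comm_ring_1) \<Rightarrow> 'a set" where
  "minors_ideal k m n M = ideal_gen {minor M R C | R C.
      R \<subseteq> {..<m} \<and> C \<subseteq> {..<n} \<and> card R = k \<and> card C = k}"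

end

theory Submission
  imports Defs "Jordan_Normal_Form.Determinant"
begin

lemma ig_zero: "0 \<in> ideal_gen X"
  unfolding ideal_gen_def by (rule CollectI, rule exI[of _ "{}"], auto)

lemma ig_base: "x \<in> X \<Longrightarrow> x \<in> ideal_gen X"
  unfolding ideal_gen_def by (rule CollectI, rule exI[of _ "{x}"], rule exI[of _ "\<lambda>_. 1"], auto)

lemma ig_mult: "a \<in> ideal_gen X \<Longrightarrow> r * a \<in> ideal_gen X"
proof -
  assume "a \<in> ideal_gen X"
  then obtain F c where F: "finite F" "F \<subseteq> X" "a = (\<Sum>x\<in>F. c x * x)"
    unfolding ideal_gen_def by auto
  have "r * a = (\<Sum>x\<in>F. (r * c x) * x)" using F(3) by (simp add: sum_distrib_left mult.assoc)
  then show ?thesis unfolding ideal_gen_def mem_Collect_eq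
    apply (rule_tac x=F in exI)
    apply (rule_tac x="\<lambda>x. r * c x" in exI)
    using F by simp
qed

lemma ig_add: "a \<in> ideal_gen X \<Longrightarrow> b \<in> ideal_gen X \<Longrightarrow> a + b \<in> ideal_gen X"
proof -
  assume "a \<in> ideal_gen X" "b \<in> ideal_gen X"
  then obtain F c G d where F: "finite F" "F \<subseteq> X" "a = (\<Sum>x\<in>F. c x * x)"
    and G: "finite G" "G \<subseteq> X" "b = (\<Sum>x\<in>G. d x * x)"
    unfolding ideal_gen_def by blast
  define e where "e x = (if x \<in> F then c x else 0) + (if x \<in> G then d x else 0)" for x
  have 1: "(\<Sum>x\<in>F \<union> G. (if x \<in> F then c x else 0) * x) = a"
  proof -
    have "(\<Sum>x\<in>F \<union> G. (if x \<in> F then c x else 0) * x) = (\<Sum>x\<in>F \<union> G. if x \<in> F then c x * x else 0)"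
      by (rule sum.cong) auto
    also have "\<dots> = sum (\<lambda>x. c x * x) ((F \<union> G) \<inter> F)" using sum.inter_restrict[of "F \<union> G" "\<lambda>x. c x * x" F] F G by simp
    also have "(F \<union> G) \<inter> F = F" by blast
    finally show ?thesis using F by simp
  qed
  have 2: "(\<Sum>x\<in>F \<union> G. (if x \<in> G then d x else 0) * x) = b"
  proof -
    have "(\<Sum>x\<in>F \<union> G. (if x \<in> G then d x else 0) * x) = (\<Sum>x\<in>F \<union> G. if x \<in> G then d x * x else 0)"
      by (rule sum.cong) auto
    also have "\<dots> = sum (\<lambda>x. d x * x) ((F \<union> G) \<inter> G)" using sum.inter_restrict[of "F \<union> G" "\<lambda>x. d x * x" G] F G by simp
    also have "(F \<union> G) \<inter> G = G" by blast
    finally show ?thesis using G by simp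
  qed
  have ab: "a + b = (\<Sum>x\<in>F \<union> G. e x * x)"
    unfolding e_def distrib_right sum.distrib 1 2 ..
  have fin: "finite (F \<union> G)" "F \<union> G \<subseteq> X" using F G by auto
  show ?thesis unfolding ideal_gen_def mem_Collect_eq
    apply (rule exI[of _ "F \<union> G"])
    apply (rule exI[of _ e])
    using fin ab by simp
qed

lemma ig_sum: "finite S \<Longrightarrow> (\<And>i. i \<in> S \<Longrightarrow> f i \<in> ideal_gen X) \<Longrightarrow> sum f S \<in> ideal_gen X"
proof (induction S rule: finite_induct)
  case empty
  then show ?case by (simp add: ig_zero)
next
  case (insert x F)
  have 1: "f x \<in> ideal_gen X" using insert.prems by simp
  have 2: "sum f F \<in> ideal_gen X" using insert.IH insert.prems by simp
  show ?case unfolding sum.insert[OF insert.hyps] by (rule ig_add[OF 1 2])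
qed

lemma ig_subset: "X \<subseteq> ideal_gen Y \<Longrightarrow> ideal_gen X \<subseteq> ideal_gen Y"
proof
  fix a assume X: "X \<subseteq> ideal_gen Y" and "a \<in> ideal_gen X"
  then obtain F c where F: "finite F" "F \<subseteq> X" "a = (\<Sum>x\<in>F. c x * x)"
    unfolding ideal_gen_def by auto
  have "c x * x \<in> ideal_gen Y" if "x \<in> F" for x
  proof -
    have "x \<in> ideal_gen Y" using that F(2) X by blast
    then show ?thesis by (rule ig_mult)
  qed
  then show "a \<in> ideal_gen Y" unfolding F(3) by (rule ig_sum[OF F(1)])
qed

lemma det_nat_mat: "det_nat k M = det (mat k k (\<lambda>(i,j). M i j))"
  unfolding det_nat_def det_def by (simp add: atLeast0LessThan)

lemma det_nat_cong: assumes "\<And>i j. i < k \<Longrightarrow> j < k \<Longrightarrow> M i j = M' i j"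
  shows "det_nat k M = det_nat k M'"
  unfolding det_nat_mat by (rule arg_cong[of _ _ det], rule eq_matI) (auto simp: assms)

lemma det_last_row:
  assumes "(N :: 'a :: comm_ring_1 mat) \<in> carrier_mat (Suc n) (Suc n)"
  shows "det N = (\<Sum>j<Suc n. N $$ (n,j) * ((-1)^(n+j) * det (mat_delete N n j)))"
  using laplace_expansion_row[OF assms, of n] unfolding cofactor_def by simp

lemma det_nat_last_row:
  "det_nat (Suc n) P = (\<Sum>j<Suc n. P n j * ((-1)^(n+j) * det_nat n (\<lambda>i j'. P i (insert_index j j'))))"
proof -
  have "det_nat (Suc n) P = det (mat (Suc n) (Suc n) (\<lambda>(i,j). P i j))" by (rule det_nat_mat)
  also have "\<dots> = (\<Sum>j<Suc n. P n j * ((-1)^(n+j) * det (mat_delete (mat (Suc n) (Suc n) (\<lambda>(i,j). P i j)) n j)))"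
    by (subst det_last_row) auto
  also have "\<dots> = (\<Sum>j<Suc n. P n j * ((-1)^(n+j) * det_nat n (\<lambda>i j'. P i (insert_index j j'))))"
  proof (rule sum.cong[OF refl])
    fix j assume "j \<in> {..<Suc n}"
    have "mat_delete (mat (Suc n) (Suc n) (\<lambda>(i,j). P i j)) n j = mat n n (\<lambda>(i,j'). P i (insert_index j j'))"
      by (rule eq_matI) (auto simp: mat_delete_def insert_index_def)
    then show "P n j * ((-1)^(n+j) * det (mat_delete (mat (Suc n) (Suc n) (\<lambda>(i,j). P i j)) n j)) =
      P n j * ((-1)^(n+j) * det_nat n (\<lambda>i j'. P i (insert_index j j')))"
      by (simp add: det_nat_mat)
  qed
  finally show ?thesis .
qed

lemma sum_split_add: fixes k n :: nat shows "(\<Sum>j<k+n. f j) = (\<Sum>j<k. f j) + (\<Sum>c<n. f (k+c))"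
  by (induction n) (auto simp: add.assoc)

lemma mat_delete_idx:
  assumes "N \<in> carrier_mat (Suc n) (Suc n)" "i' < n" "j' < n"
  shows "mat_delete N i j $$ (i', j') = N $$ (insert_index i i', insert_index j j')"
  using assms unfolding mat_delete_def insert_index_def by auto

lemma block_tri:
  fixes N :: "'a::comm_ring_1 mat"
  assumes "N \<in> carrier_mat (k+q) (k+q)"
   and "\<forall>i<k. \<forall>j<k. N $$ (i,j) = Q i j"
   and "\<forall>i<q. \<forall>j<q. N $$ (k+i, k+j) = P i j"
   and "\<forall>i<q. \<forall>j<k. N $$ (k+i, j) = 0"
  shows "det N = det_nat k Q * det_nat q P"
  using assms
proof (induction q arbitrary: N P)
  case 0
  have "N = mat k k (\<lambda>(i,j). Q i j)" by (rule eq_matI) (use 0 in auto)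
  moreover have "det_nat 0 P = 1" by (simp add: det_nat_mat)
  ultimately show ?case by (simp add: det_nat_mat)
next
  case (Suc q)
  have N: "N \<in> carrier_mat (Suc (k+q)) (Suc (k+q))" using Suc.prems(1) by simp
  let ?f = "\<lambda>j. N $$ (k+q,j) * ((-1)^(k+q+j) * det (mat_delete N (k+q) j))"
  have "det N = (\<Sum>j<Suc (k+q). ?f j)" by (rule det_last_row[OF N])
  also have "\<dots> = (\<Sum>j<k + Suc q. ?f j)" by simp
  also have "\<dots> = (\<Sum>j<k. ?f j) + (\<Sum>c<Suc q. ?f (k+c))" by (rule sum_split_add)
  also have "(\<Sum>j<k. ?f j) = 0"
    using Suc.prems(4) by (intro sum.neutral) auto
  also have "(\<Sum>c<Suc q. ?f (k+c)) = (\<Sum>c<Suc q. det_nat k Q * (P q c * ((-1)^(q+c) * det_nat q (\<lambda>i j. P i (insert_index c j)))))"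
  proof (rule sum.cong[OF refl])
    fix c assume c: "c \<in> {..<Suc q}"
    have md: "mat_delete N (k+q) (k+c) \<in> carrier_mat (k+q) (k+q)"
      using mat_delete_carrier[OF N] by simp
    have "det (mat_delete N (k+q) (k+c)) = det_nat k Q * det_nat q (\<lambda>i j. P i (insert_index c j))"
    proof (rule Suc.IH[OF md])
      show "\<forall>i<k. \<forall>j<k. mat_delete N (k+q) (k+c) $$ (i,j) = Q i j"
        using Suc.prems(2) by (auto simp: mat_delete_idx[OF N])
      show "\<forall>i<q. \<forall>j<q. mat_delete N (k+q) (k+c) $$ (k+i, k+j) = P i (insert_index c j)"
      proof (intro allI impI)
        fix i j assume ij: "i < q" "j < q"
        have "insert_index (k+c) (k+j) = k + insert_index c j" unfolding insert_index_def by auto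
        moreover have "insert_index c j < Suc q" using ij unfolding insert_index_def by auto
        ultimately show "mat_delete N (k+q) (k+c) $$ (k+i, k+j) = P i (insert_index c j)"
          using Suc.prems(3) ij by (auto simp: mat_delete_idx[OF N])
      qed
      show "\<forall>i<q. \<forall>j<k. mat_delete N (k+q) (k+c) $$ (k+i, j) = 0"
        using Suc.prems(4) by (auto simp: mat_delete_idx[OF N])
    qed
    moreover have "N $$ (k+q, k+c) = P q c" using Suc.prems(3) c by auto
    moreover have "(-1::'a)^(k+q+(k+c)) = (-1)^(q+c)"
    proof -
      have e: "k+q+(k+c) = 2*k + (q+c)" by simp
      have "(-1::'a)^(2*k+(q+c)) = (-1)^(q+c)" by (simp add: power_add power_mult)
      then show ?thesis by (simp only: e)
    qed
    ultimately show "?f (k+c) = det_nat k Q * (P q c * ((-1)^(q+c) * det_nat q (\<lambda>i j. P i (insert_index c j))))"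
      by (simp add: ac_simps)
  qed
  also have "\<dots> = det_nat k Q * det_nat (Suc q) P"
    by (simp only: det_nat_last_row[of q P] sum_distrib_left)
  finally show ?case by simp
qed

lemma delta_block:
  fixes N :: "'a::comm_ring_1 mat"
  assumes "N \<in> carrier_mat (k+q) (k+q)"
   and "\<forall>i<k. \<forall>j<k. N $$ (i, q+j) = \<phi> i j"
   and "\<forall>i<q. \<forall>j<k+q. q \<le> j \<longrightarrow> N $$ (k+i, j) = 0"
  shows "\<exists>c. det N = c * det_nat k \<phi>"
  using assms
proof (induction q arbitrary: N)
  case 0
  have "N = mat k k (\<lambda>(i,j). \<phi> i j)" by (rule eq_matI) (use 0 in auto)
  then show ?case by (intro exI[of _ 1]) (simp add: det_nat_mat)
next
  case (Suc q)
  have N: "N \<in> carrier_mat (Suc (k+q)) (Suc (k+q))" using Suc.prems(1) by simp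
  let ?f = "\<lambda>j. N $$ (k+q,j) * ((-1)^(k+q+j) * det (mat_delete N (k+q) j))"
  have "\<forall>j\<in>{..<Suc (k+q)}. \<exists>c. ?f j = c * det_nat k \<phi>"
  proof
    fix j assume j: "j \<in> {..<Suc (k+q)}"
    show "\<exists>c. ?f j = c * det_nat k \<phi>"
    proof (cases "j < Suc q")
      case True
      have md: "mat_delete N (k+q) j \<in> carrier_mat (k+q) (k+q)"
        using mat_delete_carrier[OF N] by simp
      have "\<exists>c. det (mat_delete N (k+q) j) = c * det_nat k \<phi>"
      proof (rule Suc.IH[OF md])
        show "\<forall>i<k. \<forall>j'<k. mat_delete N (k+q) j $$ (i, q+j') = \<phi> i j'"
        proof (intro allI impI)
          fix i j' assume ij: "i < k" "j' < k"
          have "insert_index j (q+j') = Suc q + j'" using True unfolding insert_index_def by auto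
          then show "mat_delete N (k+q) j $$ (i, q+j') = \<phi> i j'"
            using Suc.prems(2) ij by (auto simp: mat_delete_idx[OF N])
        qed
        show "\<forall>i<q. \<forall>j'<k+q. q \<le> j' \<longrightarrow> mat_delete N (k+q) j $$ (k+i, j') = 0"
        proof (intro allI impI)
          fix i j' assume ij: "i < q" "j' < k+q" "q \<le> j'"
          have "insert_index j j' = Suc j'" using True ij unfolding insert_index_def by auto
          then show "mat_delete N (k+q) j $$ (k+i, j') = 0"
            using Suc.prems(3) ij by (auto simp: mat_delete_idx[OF N])
        qed
      qed
      then obtain c where "det (mat_delete N (k+q) j) = c * det_nat k \<phi>" by blast
      then show ?thesis by (intro exI[of _ "N $$ (k+q,j) * ((-1)^(k+q+j) * c)"]) (simp add: ac_simps)
    next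
      case False
      then have "N $$ (k+q,j) = 0" using Suc.prems(3) j by auto
      then show ?thesis by (intro exI[of _ 0]) simp
    qed
  qed
  then obtain c where c: "\<forall>j\<in>{..<Suc (k+q)}. ?f j = c j * det_nat k \<phi>" by (metis bchoice)
  have "det N = (\<Sum>j<Suc (k+q). ?f j)" by (rule det_last_row[OF N])
  also have "\<dots> = (\<Sum>j<Suc (k+q). c j * det_nat k \<phi>)"
    by (rule sum.cong[OF refl]) (use c in blast)
  also have "\<dots> = (\<Sum>j<Suc (k+q). c j) * det_nat k \<phi>"
    by (simp only: sum_distrib_right)
  finally show ?case by blast
qed

lemma sorted_perm:
  fixes \<rho> :: "nat \<Rightarrow> nat"
  assumes inj: "inj_on \<rho> {..<t}"
  shows "\<exists>p. p permutes {..<t} \<and> (\<forall>i<t. \<rho> i = sorted_list_of_set (\<rho> ` {..<t}) ! p i)"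
proof -
  define S where "S = \<rho> ` {..<t}"
  define sr where "sr = sorted_list_of_set S"
  have fin: "finite S" unfolding S_def by simp
  have len: "length sr = t" unfolding sr_def S_def using inj by (simp add: card_image)
  have dist: "distinct sr" unfolding sr_def by simp
  have set: "set sr = S" unfolding sr_def using fin by simp
  have ex1: "\<exists>!j. j < t \<and> sr ! j = \<rho> i" if "i < t" for i
  proof -
    have "\<rho> i \<in> set sr" using that set unfolding S_def by auto
    then obtain j where "j < length sr" "sr ! j = \<rho> i" by (auto simp: in_set_conv_nth)
    moreover have "j' = j" if "j' < t" "sr ! j' = \<rho> i" for j'
      using that \<open>j < length sr\<close> \<open>sr ! j = \<rho> i\<close> dist len nth_eq_iff_index_eq by metis
    ultimately show ?thesis using len by blast
  qed
  define p where "p i = (if i < t then (THE j. j < t \<and> sr ! j = \<rho> i) else i)" for i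
  have p: "p i < t \<and> sr ! p i = \<rho> i" if "i < t" for i
    using theI'[OF ex1[OF that]] that unfolding p_def by simp
  have injp: "inj_on p {..<t}"
  proof (rule inj_onI)
    fix i i' assume "i \<in> {..<t}" "i' \<in> {..<t}" "p i = p i'"
    then have "\<rho> i = \<rho> i'" using p by (metis lessThan_iff)
    then show "i = i'" using inj \<open>i \<in> {..<t}\<close> \<open>i' \<in> {..<t}\<close> by (meson inj_onD)
  qed
  have img: "p ` {..<t} \<subseteq> {..<t}" using p by auto
  have "p ` {..<t} = {..<t}" by (rule endo_inj_surj[OF _ img injp]) simp
  then have "bij_betw p {..<t} {..<t}" using injp by (simp add: bij_betw_def)
  then have "p permutes {..<t}" by (rule bij_imp_permutes) (simp add: p_def)
  then show ?thesis using p unfolding sr_def S_def by metis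
qed

lemma tuple_minor_in:
  fixes \<phi> :: "nat \<Rightarrow> nat \<Rightarrow> 'a::comm_ring_1"
  assumes rb: "\<forall>i<t. \<rho> i < m" and cb: "\<forall>j<t. \<gamma> j < nn"
  shows "det (mat t t (\<lambda>(i,j). \<phi> (\<rho> i) (\<gamma> j))) \<in> minors_ideal t m nn \<phi>"
proof (cases "inj_on \<rho> {..<t} \<and> inj_on \<gamma> {..<t}")
  case False
  have "det (mat t t (\<lambda>(i,j). \<phi> (\<rho> i) (\<gamma> j))) = 0"
  proof (cases "inj_on \<rho> {..<t}")
    case False
    then obtain i i' where ii: "i < t" "i' < t" "i \<noteq> i'" "\<rho> i = \<rho> i'"
      unfolding inj_on_def by auto
    show ?thesis
      by (rule det_identical_rows[of _ t i i']) (use ii in \<open>auto\<close>)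
  next
    case True
    with False have "\<not> inj_on \<gamma> {..<t}" by simp
    then obtain j j' where jj: "j < t" "j' < t" "j \<noteq> j'" "\<gamma> j = \<gamma> j'"
      unfolding inj_on_def by auto
    show ?thesis
      by (rule det_identical_columns[of _ t j j']) (use jj in \<open>auto\<close>)
  qed
  then show ?thesis by (simp add: minors_ideal_def ig_zero)
next
  case True
  define R where "R = \<rho> ` {..<t}"
  define C where "C = \<gamma> ` {..<t}"
  define sr where "sr = sorted_list_of_set R"
  define sc where "sc = sorted_list_of_set C"
  obtain p where p: "p permutes {..<t}" "\<forall>i<t. \<rho> i = sr ! p i"
    using sorted_perm[of \<rho> t] True unfolding sr_def R_def by blast
  obtain q where q: "q permutes {..<t}" "\<forall>i<t. \<gamma> i = sc ! q i"
    using sorted_perm[of \<gamma> t] True unfolding sc_def C_def by blast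
  have cR: "card R = t" unfolding R_def using True by (simp add: card_image)
  have cC: "card C = t" unfolding C_def using True by (simp add: card_image)
  define A where "A = mat t t (\<lambda>(i,j). \<phi> (sr ! i) (\<gamma> j))"
  define B where "B = mat t t (\<lambda>(i,j). \<phi> (sr ! j) (sc ! i))"
  have pu: "p permutes {0..<t}" "q permutes {0..<t}" using p q by (simp_all add: atLeast0LessThan)
  have pl: "p i < t" if "i < t" for i using p(1) that by (meson lessThan_iff permutes_in_image)
  have ql: "q i < t" if "i < t" for i using q(1) that by (meson lessThan_iff permutes_in_image)
  have "mat t t (\<lambda>(i,j). \<phi> (\<rho> i) (\<gamma> j)) = mat t t (\<lambda>(i,j). A $$ (p i, j))"
    by (rule eq_matI) (auto simp: A_def p(2) pl)
  then have 1: "det (mat t t (\<lambda>(i,j). \<phi> (\<rho> i) (\<gamma> j))) = signof p * det A"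
    using det_permute_rows[of A t p] pu(1) by (simp add: A_def)
  have "transpose_mat A = mat t t (\<lambda>(i,j). B $$ (q i, j))"
    by (rule eq_matI) (auto simp: A_def B_def q(2) ql)
  then have 2: "det A = signof q * det B"
    using det_transpose[of A t] det_permute_rows[of B t q] pu(2) by (simp add: A_def B_def)
  have "transpose_mat B = mat t t (\<lambda>(i,j). \<phi> (sr ! i) (sc ! j))"
    by (rule eq_matI) (auto simp: B_def)
  then have 3: "det B = minor \<phi> R C"
    using det_transpose[of B t] unfolding minor_def cR sr_def sc_def by (simp add: B_def det_nat_mat)
  have "minor \<phi> R C \<in> minors_ideal t m nn \<phi>"
    unfolding minors_ideal_def
    by (rule ig_base) (use rb cb cR cC in \<open>auto simp: R_def C_def\<close>)
  then have "signof q * minor \<phi> R C \<in> minors_ideal t m nn \<phi>"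
    unfolding minors_ideal_def by (rule ig_mult)
  then have "signof p * (signof q * minor \<phi> R C) \<in> minors_ideal t m nn \<phi>"
    unfolding minors_ideal_def by (rule ig_mult)
  then show ?thesis unfolding 1 2 3 .
qed

lemma insert_index_inj: "inj (insert_index i)"
  unfolding inj_def insert_index_def by auto

lemma phirows_in:
  fixes \<phi> :: "nat \<Rightarrow> nat \<Rightarrow> 'a::comm_ring_1" and N :: "'a mat"
  assumes "N \<in> carrier_mat n n" "G \<subseteq> {..<n}" "t \<le> card G"
    "\<forall>i\<in>G. \<forall>j<n. N $$ (i,j) = \<phi> (\<rho> i) (\<gamma> j)" "\<forall>i\<in>G. \<rho> i < m" "\<forall>j<n. \<gamma> j < nn"
  shows "det N \<in> minors_ideal t m nn \<phi>"
  using assms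
proof (induction n arbitrary: N G \<rho> \<gamma>)
  case 0
  then have "G = {}" by simp
  then have "card G = 0" by simp
  then have "t = 0" using 0 by simp
  have "det N = det (mat 0 0 (\<lambda>(i,j). \<phi> (\<rho> i) (\<gamma> j)))"
    using 0 by (metis carrier_matD(1,2) det_dim_zero mat_carrier)
  then show ?case using tuple_minor_in[of 0 \<rho> m \<gamma> nn \<phi>] \<open>t = 0\<close> by simp
next
  case (Suc n)
  have cG: "card G \<le> Suc n" using Suc.prems(2) by (metis card_lessThan card_mono finite_lessThan)
  show ?case
  proof (cases "t = Suc n")
    case True
    then have "card G = Suc n" using cG Suc.prems(3) by simp
    then have G: "G = {..<Suc n}" using Suc.prems(2) by (simp add: card_subset_eq)
    have "N = mat (Suc n) (Suc n) (\<lambda>(i,j). \<phi> (\<rho> i) (\<gamma> j))"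
      by (rule eq_matI) (use Suc.prems G in auto)
    then show ?thesis using tuple_minor_in[of "Suc n" \<rho> m \<gamma> nn \<phi>] Suc.prems G True by simp
  next
    case False
    then have tn: "t \<le> n" using Suc.prems(3) cG by simp
    obtain i0 where i0: "i0 < Suc n" and cGi: "t \<le> card (G - {i0})"
    proof (cases "\<exists>i<Suc n. i \<notin> G")
      case True
      then obtain i where i: "i < Suc n" "i \<notin> G" by blast
      then have "G - {i} = G" by simp
      then show ?thesis using that[OF i(1)] Suc.prems(3) by simp
    next
      case False
      then have "G = {..<Suc n}" using Suc.prems(2) by auto
      then have "G - {n} = {..<n}" by auto
      then show ?thesis using that[of n] tn by simp
    qed
    define G' where "G' = {i'. i' < n \<and> insert_index i0 i' \<in> G}"
    have G'img: "insert_index i0 ` G' = G - {i0}"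
    proof
      show "insert_index i0 ` G' \<subseteq> G - {i0}" unfolding G'_def by auto
      show "G - {i0} \<subseteq> insert_index i0 ` G'"
      proof
        fix x assume x: "x \<in> G - {i0}"
        then have "x < Suc n" using Suc.prems(2) by auto
        have "insert_index i0 (delete_index i0 x) = x" using x by (simp add: insert_delete_index)
        moreover have "delete_index i0 x < n" using x \<open>x < Suc n\<close> i0 unfolding delete_index_def by auto
        ultimately show "x \<in> insert_index i0 ` G'" unfolding G'_def using x by (intro image_eqI[of _ _ "delete_index i0 x"]) auto
      qed
    qed
    have "card (insert_index i0 ` G') = card G'"
      by (rule card_image) (rule inj_on_subset[OF insert_index_inj subset_UNIV])
    then have cG': "t \<le> card G'" using cGi G'img by simp
    have N: "N \<in> carrier_mat (Suc n) (Suc n)" using Suc.prems(1) .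
    have "det N = (\<Sum>j<Suc n. N $$ (i0,j) * cofactor N i0 j)"
      by (rule laplace_expansion_row[OF N i0])
    also have "\<dots> \<in> minors_ideal t m nn \<phi>" unfolding minors_ideal_def
    proof (rule ig_sum, simp)
      fix j assume j: "j \<in> {..<Suc n}"
      have md: "mat_delete N i0 j \<in> carrier_mat n n" using mat_delete_carrier[OF N] by simp
      have "det (mat_delete N i0 j) \<in> minors_ideal t m nn \<phi>"
      proof (rule Suc.IH[OF md _ cG', of "\<rho> \<circ> insert_index i0" "\<gamma> \<circ> insert_index j"])
        show "G' \<subseteq> {..<n}" unfolding G'_def by auto
        show "\<forall>i\<in>G'. \<forall>j'<n. mat_delete N i0 j $$ (i, j') = \<phi> ((\<rho> \<circ> insert_index i0) i) ((\<gamma> \<circ> insert_index j) j')"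
        proof (intro ballI allI impI)
          fix i j' assume i: "i \<in> G'" and j': "j' < n"
          have "i < n" "insert_index i0 i \<in> G" using i unfolding G'_def by auto
          moreover have "insert_index j j' < Suc n" using j' unfolding insert_index_def by auto
          ultimately show "mat_delete N i0 j $$ (i, j') = \<phi> ((\<rho> \<circ> insert_index i0) i) ((\<gamma> \<circ> insert_index j) j')"
            using Suc.prems(4) j' by (simp add: mat_delete_idx[OF N])
        qed
        show "\<forall>i\<in>G'. (\<rho> \<circ> insert_index i0) i < m" using Suc.prems(5) unfolding G'_def by auto
        show "\<forall>j'<n. (\<gamma> \<circ> insert_index j) j' < nn"
        proof (intro allI impI)
          fix j' assume "j' < n"
          then have "insert_index j j' < Suc n" unfolding insert_index_def by auto
          then show "(\<gamma> \<circ> insert_index j) j' < nn" using Suc.prems(6) by simp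
        qed
      qed
      then show "N $$ (i0, j) * cofactor N i0 j \<in> ideal_gen {minor \<phi> R C |R C. R \<subseteq> {..<m} \<and> C \<subseteq> {..<nn} \<and> card R = t \<and> card C = t}"
        unfolding cofactor_def minors_ideal_def by (intro ig_mult)
    qed
    finally show ?thesis .
  qed
qed

lemma split_main:
  fixes \<phi> :: "nat \<Rightarrow> nat \<Rightarrow> 'a::comm_ring_1"
  assumes km: "k < m" and cb: "\<forall>j<k+k. cl j < nn" and clK: "\<forall>j<k. cl (k+j) = j"
    and rb: "\<forall>l<k. rr l < m"
  shows "\<forall>N. N \<in> carrier_mat (k+k) (k+k) \<longrightarrow> (\<forall>i<k. \<forall>j<k+k. N $$ (i,j) = \<phi> i (cl j)) \<longrightarrow>
    (\<forall>l<k. p \<le> l \<longrightarrow> ((\<forall>j<k+k. N $$ (k+l,j) = \<phi> (rr l) (cl j)) \<or> (\<forall>j<k+k. k \<le> j \<longrightarrow> N $$ (k+l,j) = 0))) \<longrightarrow>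
    (\<forall>l<k. (\<forall>j<k+k. N $$ (k+l,j) = \<phi> (rr l) (cl j)) \<or> (\<forall>j<k+k. k \<le> j \<longrightarrow> N $$ (k+l,j) = 0)
       \<or> (\<forall>j<k+k. N $$ (k+l,j) = (if j < k then 0 else \<phi> (rr l) (cl j)))) \<longrightarrow>
    det N \<in> ideal_gen (insert (det_nat k \<phi>) (minors_ideal (k+1) m nn \<phi>))"
proof (induction p)
  case 0
  show ?case
  proof (intro allI impI)
    fix N :: "'a mat"
    assume N: "N \<in> carrier_mat (k+k) (k+k)" and top: "\<forall>i<k. \<forall>j<k+k. N $$ (i,j) = \<phi> i (cl j)"
      and GZ: "\<forall>l<k. 0 \<le> l \<longrightarrow> ((\<forall>j<k+k. N $$ (k+l,j) = \<phi> (rr l) (cl j)) \<or> (\<forall>j<k+k. k \<le> j \<longrightarrow> N $$ (k+l,j) = 0))"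
    show "det N \<in> ideal_gen (insert (det_nat k \<phi>) (minors_ideal (k+1) m nn \<phi>))"
    proof (cases "\<exists>l<k. \<forall>j<k+k. N $$ (k+l,j) = \<phi> (rr l) (cl j)")
      case True
      then obtain l where l: "l < k" "\<forall>j<k+k. N $$ (k+l,j) = \<phi> (rr l) (cl j)" by blast
      define \<rho> where "\<rho> i = (if i < k then i else rr (i - k))" for i
      have "det N \<in> minors_ideal (k+1) m nn \<phi>"
      proof (rule phirows_in[OF N, of "insert (k+l) {..<k}" "k+1" \<phi> \<rho> cl])
        show "insert (k+l) {..<k} \<subseteq> {..<k+k}" using l by auto
        show "k + 1 \<le> card (insert (k+l) {..<k})" by simp
        show "\<forall>i\<in>insert (k+l) {..<k}. \<forall>j<k+k. N $$ (i,j) = \<phi> (\<rho> i) (cl j)"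
          using top l by (auto simp: \<rho>_def)
        show "\<forall>i\<in>insert (k+l) {..<k}. \<rho> i < m" using km rb l by (auto simp: \<rho>_def)
        show "\<forall>j<k+k. cl j < nn" using cb .
      qed
      then have "det N \<in> insert (det_nat k \<phi>) (minors_ideal (k+1) m nn \<phi>)" by simp
      then show ?thesis by (rule ig_base)
    next
      case False
      then have Z: "\<forall>i<k. \<forall>j<k+k. k \<le> j \<longrightarrow> N $$ (k+i,j) = 0" using GZ by blast
      have "\<exists>c. det N = c * det_nat k \<phi>"
      proof (rule delta_block[OF N])
        show "\<forall>i<k. \<forall>j<k. N $$ (i, k+j) = \<phi> i j" using top clK by auto
        show "\<forall>i<k. \<forall>j<k+k. k \<le> j \<longrightarrow> N $$ (k+i, j) = 0" using Z .
      qed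
      then obtain c where c: "det N = c * det_nat k \<phi>" by blast
      have "det_nat k \<phi> \<in> ideal_gen (insert (det_nat k \<phi>) (minors_ideal (k+1) m nn \<phi>))"
        by (rule ig_base) simp
      then show ?thesis unfolding c by (rule ig_mult)
    qed
  qed
next
  case (Suc p)
  show ?case
  proof (intro allI impI)
    fix N :: "'a mat"
    assume N: "N \<in> carrier_mat (k+k) (k+k)" and top: "\<forall>i<k. \<forall>j<k+k. N $$ (i,j) = \<phi> i (cl j)"
      and GZ: "\<forall>l<k. Suc p \<le> l \<longrightarrow> ((\<forall>j<k+k. N $$ (k+l,j) = \<phi> (rr l) (cl j)) \<or> (\<forall>j<k+k. k \<le> j \<longrightarrow> N $$ (k+l,j) = 0))"
      and GZP: "\<forall>l<k. (\<forall>j<k+k. N $$ (k+l,j) = \<phi> (rr l) (cl j)) \<or> (\<forall>j<k+k. k \<le> j \<longrightarrow> N $$ (k+l,j) = 0)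
       \<or> (\<forall>j<k+k. N $$ (k+l,j) = (if j < k then 0 else \<phi> (rr l) (cl j)))"
    show "det N \<in> ideal_gen (insert (det_nat k \<phi>) (minors_ideal (k+1) m nn \<phi>))"
    proof (cases "p < k \<and> \<not> ((\<forall>j<k+k. N $$ (k+p,j) = \<phi> (rr p) (cl j)) \<or> (\<forall>j<k+k. k \<le> j \<longrightarrow> N $$ (k+p,j) = 0))")
      case False
      have "\<forall>l<k. p \<le> l \<longrightarrow> ((\<forall>j<k+k. N $$ (k+l,j) = \<phi> (rr l) (cl j)) \<or> (\<forall>j<k+k. k \<le> j \<longrightarrow> N $$ (k+l,j) = 0))"
      proof (intro allI impI)
        fix l assume l: "l < k" "p \<le> l"
        show "(\<forall>j<k+k. N $$ (k+l,j) = \<phi> (rr l) (cl j)) \<or> (\<forall>j<k+k. k \<le> j \<longrightarrow> N $$ (k+l,j) = 0)"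
        proof (cases "l = p")
          case True
          then show ?thesis using False l by blast
        next
          case False
          then have "Suc p \<le> l" using l by simp
          then show ?thesis using GZ l(1) by simp
        qed
      qed
      then show ?thesis by (rule mp[OF mp[OF mp[OF mp[OF spec[OF Suc.IH] N] top] _] GZP])
    next
      case True
      then have pk: "p < k" and Pp: "\<forall>j<k+k. N $$ (k+p,j) = (if j < k then 0 else \<phi> (rr p) (cl j))"
        using GZP by auto
      define n2 where "n2 = k + k"
      define a where "a = vec n2 (\<lambda>j. \<phi> (rr p) (cl j))"
      define b where "b = vec n2 (\<lambda>j. if j < k then - \<phi> (rr p) (cl j) else 0)"
      define c where "c = (\<lambda>i. row N i)"
      have rowc: "c \<in> {0..<n2} \<rightarrow> carrier_vec n2" unfolding c_def n2_def using N by auto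
      have kp: "k + p < n2" unfolding n2_def using pk by simp
      have NN: "N = mat\<^sub>r n2 n2 (\<lambda>i. if i = k+p then (\<lambda>_. a) i + (\<lambda>_. b) i else c i)"
        by (rule eq_matI) (use N Pp in \<open>auto simp: a_def b_def c_def n2_def\<close>)
      have split: "det N = det (mat\<^sub>r n2 n2 (\<lambda>i. if i = k+p then (\<lambda>_. a) i else c i)) +
          det (mat\<^sub>r n2 n2 (\<lambda>i. if i = k+p then (\<lambda>_. b) i else c i))"
        by (subst NN, rule det_row_add) (use rowc kp in \<open>auto simp: a_def b_def\<close>)
      define Na where "Na = mat\<^sub>r n2 n2 (\<lambda>i. if i = k+p then a else c i)"
      define Nb where "Nb = mat\<^sub>r n2 n2 (\<lambda>i. if i = k+p then b else c i)"
      have "det Na \<in> ideal_gen (insert (det_nat k \<phi>) (minors_ideal (k+1) m nn \<phi>))"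
      proof -
        have c1: "Na \<in> carrier_mat (k+k) (k+k)" unfolding Na_def n2_def by simp
        have c2: "\<forall>i<k. \<forall>j<k+k. Na $$ (i,j) = \<phi> i (cl j)"
          using top N by (auto simp: Na_def c_def n2_def)
        have c3: "\<forall>l<k. p \<le> l \<longrightarrow> ((\<forall>j<k+k. Na $$ (k+l,j) = \<phi> (rr l) (cl j)) \<or> (\<forall>j<k+k. k \<le> j \<longrightarrow> Na $$ (k+l,j) = 0))"
        proof (intro allI impI)
          fix l assume l: "l < k" "p \<le> l"
          show "(\<forall>j<k+k. Na $$ (k+l,j) = \<phi> (rr l) (cl j)) \<or> (\<forall>j<k+k. k \<le> j \<longrightarrow> Na $$ (k+l,j) = 0)"
          proof (cases "l = p")
            case True
            then show ?thesis using l by (auto simp: Na_def a_def n2_def)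
          next
            case False
            then have "Suc p \<le> l" using l by simp
            then show ?thesis using GZ l N False by (auto simp: Na_def c_def n2_def)
          qed
        qed
        have c4: "\<forall>l<k. (\<forall>j<k+k. Na $$ (k+l,j) = \<phi> (rr l) (cl j)) \<or> (\<forall>j<k+k. k \<le> j \<longrightarrow> Na $$ (k+l,j) = 0)
           \<or> (\<forall>j<k+k. Na $$ (k+l,j) = (if j < k then 0 else \<phi> (rr l) (cl j)))"
        proof (intro allI impI)
          fix l assume l: "l < k"
          show "(\<forall>j<k+k. Na $$ (k+l,j) = \<phi> (rr l) (cl j)) \<or> (\<forall>j<k+k. k \<le> j \<longrightarrow> Na $$ (k+l,j) = 0)
           \<or> (\<forall>j<k+k. Na $$ (k+l,j) = (if j < k then 0 else \<phi> (rr l) (cl j)))"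
          proof (cases "l = p")
            case True
            then show ?thesis using l by (auto simp: Na_def a_def n2_def)
          next
            case False
            then show ?thesis using GZP l N False by (auto simp: Na_def c_def n2_def)
          qed
        qed
        show ?thesis by (rule mp[OF mp[OF mp[OF mp[OF spec[OF Suc.IH] c1] c2] c3] c4])
      qed
      moreover have "det Nb \<in> ideal_gen (insert (det_nat k \<phi>) (minors_ideal (k+1) m nn \<phi>))"
      proof -
        have c1: "Nb \<in> carrier_mat (k+k) (k+k)" unfolding Nb_def n2_def by simp
        have c2: "\<forall>i<k. \<forall>j<k+k. Nb $$ (i,j) = \<phi> i (cl j)"
          using top N by (auto simp: Nb_def c_def n2_def)
        have c3: "\<forall>l<k. p \<le> l \<longrightarrow> ((\<forall>j<k+k. Nb $$ (k+l,j) = \<phi> (rr l) (cl j)) \<or> (\<forall>j<k+k. k \<le> j \<longrightarrow> Nb $$ (k+l,j) = 0))"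
        proof (intro allI impI)
          fix l assume l: "l < k" "p \<le> l"
          show "(\<forall>j<k+k. Nb $$ (k+l,j) = \<phi> (rr l) (cl j)) \<or> (\<forall>j<k+k. k \<le> j \<longrightarrow> Nb $$ (k+l,j) = 0)"
          proof (cases "l = p")
            case True
            then show ?thesis using l by (auto simp: Nb_def b_def n2_def)
          next
            case False
            then have "Suc p \<le> l" using l by simp
            then show ?thesis using GZ l N False by (auto simp: Nb_def c_def n2_def)
          qed
        qed
        have c4: "\<forall>l<k. (\<forall>j<k+k. Nb $$ (k+l,j) = \<phi> (rr l) (cl j)) \<or> (\<forall>j<k+k. k \<le> j \<longrightarrow> Nb $$ (k+l,j) = 0)
           \<or> (\<forall>j<k+k. Nb $$ (k+l,j) = (if j < k then 0 else \<phi> (rr l) (cl j)))"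
        proof (intro allI impI)
          fix l assume l: "l < k"
          show "(\<forall>j<k+k. Nb $$ (k+l,j) = \<phi> (rr l) (cl j)) \<or> (\<forall>j<k+k. k \<le> j \<longrightarrow> Nb $$ (k+l,j) = 0)
           \<or> (\<forall>j<k+k. Nb $$ (k+l,j) = (if j < k then 0 else \<phi> (rr l) (cl j)))"
          proof (cases "l = p")
            case True
            then show ?thesis using l by (auto simp: Nb_def b_def n2_def)
          next
            case False
            then show ?thesis using GZP l N False by (auto simp: Nb_def c_def n2_def)
          qed
        qed
        show ?thesis by (rule mp[OF mp[OF mp[OF mp[OF spec[OF Suc.IH] c1] c2] c3] c4])
      qed
      ultimately show ?thesis unfolding split Na_def Nb_def by (rule ig_add)
    qed
  qed
qed

lemma sorted_lessThan_nth: "i < k \<Longrightarrow> sorted_list_of_set {..<k} ! i = i"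
proof -
  assume "i < k"
  have "{..<k} = {0..<k}" by auto
  then show ?thesis using \<open>i < k\<close> by simp
qed

lemma prod_in:
  fixes \<phi> :: "nat \<Rightarrow> nat \<Rightarrow> 'a::comm_ring_1"
  assumes km: "k < m" and kn: "k \<le> nn" and R: "R \<subseteq> {..<m}" "card R = k"
    and D: "D \<subseteq> {..<nn}" "card D = k"
  shows "minor \<phi> R {..<k} * minor \<phi> {..<k} D \<in> ideal_gen (insert (det_nat k \<phi>) (minors_ideal (k+1) m nn \<phi>))"
proof -
  define sR where "sR = sorted_list_of_set R"
  define sD where "sD = sorted_list_of_set D"
  have finR: "finite R" using R(1) finite_subset by blast
  have finD: "finite D" using D(1) finite_subset by blast
  have lR: "length sR = k" unfolding sR_def using R(2) by simp
  have lD: "length sD = k" unfolding sD_def using D(2) by simp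
  have sRm: "sR ! l < m" if "l < k" for l
  proof -
    have "sR ! l \<in> set sR" using that lR by simp
    then have "sR ! l \<in> R" unfolding sR_def using finR by simp
    then show ?thesis using R(1) by auto
  qed
  have sDn: "sD ! l < nn" if "l < k" for l
  proof -
    have "sD ! l \<in> set sD" using that lD by simp
    then have "sD ! l \<in> D" unfolding sD_def using finD by simp
    then show ?thesis using D(1) by auto
  qed
  define rr where "rr l = sR ! l" for l
  define cl where "cl j = (if j < k then sD ! j else j - k)" for j
  define N0 where "N0 = mat (k+k) (k+k) (\<lambda>(i,j). if i < k then \<phi> i (cl j) else if j < k then 0 else \<phi> (rr (i-k)) (cl j))"
  have cb: "\<forall>j<k+k. cl j < nn" using sDn kn unfolding cl_def by auto
  have clK: "\<forall>j<k. cl (k+j) = j" unfolding cl_def by auto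
  have rb: "\<forall>l<k. rr l < m" using sRm unfolding rr_def by auto
  have c1: "N0 \<in> carrier_mat (k+k) (k+k)" unfolding N0_def by simp
  have c2: "\<forall>i<k. \<forall>j<k+k. N0 $$ (i,j) = \<phi> i (cl j)" unfolding N0_def by auto
  have c3: "\<forall>l<k. k \<le> l \<longrightarrow> ((\<forall>j<k+k. N0 $$ (k+l,j) = \<phi> (rr l) (cl j)) \<or> (\<forall>j<k+k. k \<le> j \<longrightarrow> N0 $$ (k+l,j) = 0))"
    by auto
  have c4: "\<forall>l<k. (\<forall>j<k+k. N0 $$ (k+l,j) = \<phi> (rr l) (cl j)) \<or> (\<forall>j<k+k. k \<le> j \<longrightarrow> N0 $$ (k+l,j) = 0)
       \<or> (\<forall>j<k+k. N0 $$ (k+l,j) = (if j < k then 0 else \<phi> (rr l) (cl j)))"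
    unfolding N0_def by auto
  have inJ: "det N0 \<in> ideal_gen (insert (det_nat k \<phi>) (minors_ideal (k+1) m nn \<phi>))"
    by (rule mp[OF mp[OF mp[OF mp[OF spec[OF split_main[OF km cb clK rb, of _ k]] c1] c2] c3] c4])
  have "det N0 = det_nat k (\<lambda>i j. \<phi> i (cl j)) * det_nat k (\<lambda>i j. \<phi> (rr i) (cl (k+j)))"
    by (rule block_tri[OF c1]) (auto simp: N0_def)
  also have "det_nat k (\<lambda>i j. \<phi> i (cl j)) = minor \<phi> {..<k} D"
    unfolding minor_def by (simp, rule det_nat_cong) (simp add: cl_def sorted_lessThan_nth sD_def)
  also have "det_nat k (\<lambda>i j. \<phi> (rr i) (cl (k+j))) = minor \<phi> R {..<k}"
    unfolding minor_def R(2) by (rule det_nat_cong) (simp add: cl_def rr_def sorted_lessThan_nth sR_def)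
  finally show ?thesis using inJ by (simp add: mult.commute)
qed

lemma prod_gen:
  assumes "a \<in> ideal_gen X" "b \<in> ideal_gen Y" "\<And>x y. x \<in> X \<Longrightarrow> y \<in> Y \<Longrightarrow> x * y \<in> ideal_gen Z"
  shows "a * b \<in> ideal_gen Z"
proof -
  obtain F c where F: "finite F" "F \<subseteq> X" "a = (\<Sum>x\<in>F. c x * x)"
    using assms(1) unfolding ideal_gen_def by auto
  obtain G d where G: "finite G" "G \<subseteq> Y" "b = (\<Sum>y\<in>G. d y * y)"
    using assms(2) unfolding ideal_gen_def by auto
  have "a * b = (\<Sum>x\<in>F. \<Sum>y\<in>G. (c x * x) * (d y * y))"
    unfolding F(3) G(3) by (rule sum_product)
  also have "\<dots> = (\<Sum>x\<in>F. \<Sum>y\<in>G. (c x * d y) * (x * y))"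
    by (simp add: ac_simps)
  also have "\<dots> \<in> ideal_gen Z"
  proof (rule ig_sum[OF F(1)])
    fix x assume x: "x \<in> F"
    show "(\<Sum>y\<in>G. (c x * d y) * (x * y)) \<in> ideal_gen Z"
    proof (rule ig_sum[OF G(1)])
      fix y assume y: "y \<in> G"
      have "x * y \<in> ideal_gen Z" using assms(3) x y F(2) G(2) by blast
      then show "(c x * d y) * (x * y) \<in> ideal_gen Z" by (rule ig_mult)
    qed
  qed
  finally show ?thesis .
qed

theorem lemma3p2:
  fixes \<phi> :: "nat \<Rightarrow> nat \<Rightarrow> 'a::comm_ring_1" and m n t :: nat
  assumes "noetherian_ring TYPE('a)"
    and "m \<le> n" and "1 \<le> t" and "t \<le> m"
  shows "ideal_gen {a * b | a b. a \<in> minors_ideal (t - 1) m (t - 1) \<phi>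
                               \<and> b \<in> minors_ideal (t - 1) (t - 1) n \<phi>}
         \<subseteq> ideal_gen (insert (det_nat (t - 1) \<phi>) (minors_ideal t m n \<phi>))"
proof -
  obtain k where t: "t = k + 1" using assms(3) by (metis add.commute le_add_diff_inverse)
  have km: "k < m" and kn: "k \<le> n" using assms(2,4) t by auto
  let ?J = "ideal_gen (insert (det_nat k \<phi>) (minors_ideal (k+1) m n \<phi>))"
  have "{a * b | a b. a \<in> minors_ideal k m k \<phi> \<and> b \<in> minors_ideal k k n \<phi>} \<subseteq> ?J"
  proof
    fix z assume "z \<in> {a * b | a b. a \<in> minors_ideal k m k \<phi> \<and> b \<in> minors_ideal k k n \<phi>}"
    then obtain a b where z: "z = a * b" and a: "a \<in> minors_ideal k m k \<phi>" and b: "b \<in> minors_ideal k k n \<phi>"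
      by blast
    show "z \<in> ?J" unfolding z
    proof (rule prod_gen[OF a[unfolded minors_ideal_def] b[unfolded minors_ideal_def]])
      fix x y
      assume x: "x \<in> {minor \<phi> R C |R C. R \<subseteq> {..<m} \<and> C \<subseteq> {..<k} \<and> card R = k \<and> card C = k}"
        and y: "y \<in> {minor \<phi> R C |R C. R \<subseteq> {..<k} \<and> C \<subseteq> {..<n} \<and> card R = k \<and> card C = k}"
      obtain R C where x': "x = minor \<phi> R C" "R \<subseteq> {..<m}" "C \<subseteq> {..<k}" "card R = k" "card C = k"
        using x by blast
      obtain R' C' where y': "y = minor \<phi> R' C'" "R' \<subseteq> {..<k}" "C' \<subseteq> {..<n}" "card R' = k" "card C' = k"
        using y by blast
      have "C = {..<k}" using x'(3,5) by (simp add: card_subset_eq)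
      moreover have "R' = {..<k}" using y'(2,4) by (simp add: card_subset_eq)
      ultimately show "x * y \<in> ?J" unfolding x'(1) y'(1)
        using prod_in[OF km kn x'(2,4) y'(3,5)] by simp
    qed
  qed
  then have "ideal_gen {a * b | a b. a \<in> minors_ideal k m k \<phi> \<and> b \<in> minors_ideal k k n \<phi>} \<subseteq> ?J"
    by (rule ig_subset)
  then show ?thesis using t by simp
qed

end
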